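(* Let $I\subset S=K[x_1,\dots,x_t]$ be a nonzero proper monomial ideal. Then there exist positive integers $n_0$ and $d$ such that $v(I^{n+1})\le n\,\alpha(I)+d$ for all $n\ge n_0$.
   Context: $K$ is a field and $S$ is standard graded. For a proper graded ideal $J$, the $v$-number is $v(J)=\min\{k\ge 0 : \exists f\in S_k,\ \mathcal P\in\operatorname{Ass}(S/J) \text{ with } (J:f)=\mathcal P\}$. For a nonzero graded ideal $I$, $\alpha(I)=\min\{\deg f : f\in I\setminus\{0\} \text{ homogeneous}\}$. *)

theory Defs
  imports "HOL-Library.Poly_Mapping"
begin

text \<open>Polynomial ring S = K[x_i : i in 'n] over a field K, with a finite type 'n of variables
  (t = CARD('n)). A polynomial is a finitely supported map from exponent vectors
  (monomials, 'n =>0 nat) to coefficients; multiplication is convolution.\<close>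

type_synonym ('n, 'a) mpoly = "('n \<Rightarrow>\<^sub>0 nat) \<Rightarrow>\<^sub>0 'a"

definition mono_deg :: "('n::finite \<Rightarrow>\<^sub>0 nat) \<Rightarrow> nat" where
  "mono_deg m = (\<Sum>i\<in>UNIV. Poly_Mapping.lookup m i)"

definition monomial_poly :: "('n::finite \<Rightarrow>\<^sub>0 nat) \<Rightarrow> ('n, 'a::field) mpoly" where
  "monomial_poly m = Poly_Mapping.single m 1"

text \<open>f is in S_k: homogeneous of degree k (0 is in every S_k).\<close>
definition homogeneous :: "nat \<Rightarrow> ('n::finite, 'a::field) mpoly \<Rightarrow> bool" where
  "homogeneous k f \<longleftrightarrow> (\<forall>m\<in>Poly_Mapping.keys f. mono_deg m = k)"

definition is_ideal :: "('n::finite, 'a::field) mpoly set \<Rightarrow> bool" where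
  "is_ideal I \<longleftrightarrow> 0 \<in> I \<and> (\<forall>a\<in>I. \<forall>b\<in>I. a + b \<in> I) \<and> (\<forall>a\<in>I. \<forall>r. r * a \<in> I)"

definition ideal_gen :: "('n::finite, 'a::field) mpoly set \<Rightarrow> ('n, 'a) mpoly set" where
  "ideal_gen G = \<Inter>{J. is_ideal J \<and> G \<subseteq> J}"

definition monomial_ideal :: "('n::finite, 'a::field) mpoly set \<Rightarrow> bool" where
  "monomial_ideal I \<longleftrightarrow> (\<exists>M. I = ideal_gen (monomial_poly ` M))"

fun ideal_pow :: "('n::finite, 'a::field) mpoly set \<Rightarrow> nat \<Rightarrow> ('n, 'a) mpoly set" where
  "ideal_pow I 0 = UNIV"
| "ideal_pow I (Suc n) = ideal_gen {a * b | a b. a \<in> I \<and> b \<in> ideal_pow I n}"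

definition colon :: "('n::finite, 'a::field) mpoly set \<Rightarrow> ('n, 'a) mpoly \<Rightarrow> ('n, 'a) mpoly set" where
  "colon J f = {g. g * f \<in> J}"

definition prime_ideal :: "('n::finite, 'a::field) mpoly set \<Rightarrow> bool" where
  "prime_ideal P \<longleftrightarrow> is_ideal P \<and> P \<noteq> UNIV \<and> (\<forall>a b. a * b \<in> P \<longrightarrow> a \<in> P \<or> b \<in> P)"

text \<open>Associated primes of S/J: primes of the form (J : g) = Ann(g + J).\<close>
definition Ass :: "('n::finite, 'a::field) mpoly set \<Rightarrow> ('n, 'a) mpoly set set" where
  "Ass J = {P. prime_ideal P \<and> (\<exists>g. P = colon J g)}"

definition v_number :: "('n::finite, 'a::field) mpoly set \<Rightarrow> nat" where
  "v_number J = (LEAST k. \<exists>f P. homogeneous k f \<and> P \<in> Ass J \<and> colon J f = P)"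

definition alpha :: "('n::finite, 'a::field) mpoly set \<Rightarrow> nat" where
  "alpha I = (LEAST d. \<exists>f. f \<in> I \<and> f \<noteq> 0 \<and> homogeneous d f)"

end

theory Submission
  imports Defs
begin


lemma ideal_gen_ideal: "is_ideal (ideal_gen G)"
  unfolding ideal_gen_def is_ideal_def by auto

lemma ideal_gen_sub: "G \<subseteq> ideal_gen G"
  unfolding ideal_gen_def by auto

lemma ideal_gen_least: "is_ideal J \<Longrightarrow> G \<subseteq> J \<Longrightarrow> ideal_gen G \<subseteq> J"
  unfolding ideal_gen_def by auto

lemma ideal_UNIV: "is_ideal UNIV" unfolding is_ideal_def by auto

lemma ideal_pow_ideal: "is_ideal (ideal_pow I k)"
  by (cases k) (auto simp: ideal_UNIV ideal_gen_ideal)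

lemma ideal_multR: "is_ideal J \<Longrightarrow> a \<in> J \<Longrightarrow> a * r \<in> J"
  unfolding is_ideal_def by (metis mult.commute)

lemma ideal_sum: assumes "is_ideal J" "finite S" "\<And>x. x \<in> S \<Longrightarrow> f x \<in> J" shows "sum f S \<in> J"
  using assms(2,3) by (induction S rule: finite_induct) (use assms(1) in \<open>auto simp: is_ideal_def\<close>)

lemma mono_mult: "monomial_poly a * (monomial_poly b :: ('n::finite,'a::field) mpoly) = monomial_poly (a + b)"
  unfolding monomial_poly_def by (simp add: mult_single)

lemma keys_mono[simp]: "Poly_Mapping.keys (monomial_poly a :: ('n::finite,'a::field) mpoly) = {a}"
  unfolding monomial_poly_def by simp

lemma poly_decomp: "(p :: ('n::finite,'a::field) mpoly) = (\<Sum>k\<in>Poly_Mapping.keys p. Poly_Mapping.single k (Poly_Mapping.lookup p k))"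
proof (rule poly_mapping_eqI)
  fix m
  show "Poly_Mapping.lookup p m = Poly_Mapping.lookup (\<Sum>k\<in>Poly_Mapping.keys p. Poly_Mapping.single k (Poly_Mapping.lookup p k)) m"
    unfolding lookup_sum by (cases "m \<in> Poly_Mapping.keys p") (auto simp: lookup_single when_def in_keys_iff)
qed

definition MC :: "('n::finite, 'a::field) mpoly set \<Rightarrow> ('n, 'a) mpoly set" where
  "MC J = {f. \<forall>m\<in>Poly_Mapping.keys f. monomial_poly m \<in> J}"

lemma MC_ideal: assumes "is_ideal J" shows "is_ideal (MC J)"
  unfolding is_ideal_def
proof (intro conjI ballI allI)
  show "0 \<in> MC J" by (simp add: MC_def)
  fix a b assume "a \<in> MC J" "b \<in> MC J"
  then show "a + b \<in> MC J" unfolding MC_def using keys_add[of a b] by auto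
next
  fix a r assume a: "a \<in> MC J"
  show "r * a \<in> MC J" unfolding MC_def
  proof (intro CollectI ballI)
    fix m assume "m \<in> Poly_Mapping.keys (r * a)"
    then obtain x y where "m = x + y" "y \<in> Poly_Mapping.keys a" using keys_mult by blast
    then have "monomial_poly y \<in> J" "monomial_poly m = monomial_poly x * monomial_poly y"
      using a by (auto simp: MC_def mono_mult)
    then show "monomial_poly m \<in> J" using assms unfolding is_ideal_def by metis
  qed
qed

lemma MC_sub: assumes "is_ideal J" shows "MC J \<subseteq> J"
proof
  fix f assume f: "f \<in> MC J"
  have "(\<Sum>k\<in>Poly_Mapping.keys f. Poly_Mapping.single k (Poly_Mapping.lookup f k)) \<in> J"
  proof (rule ideal_sum[OF assms])
    fix k assume k: "k \<in> Poly_Mapping.keys f"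
    have "Poly_Mapping.single k (Poly_Mapping.lookup f k) = Poly_Mapping.single 0 (Poly_Mapping.lookup f k) * monomial_poly k"
      by (simp add: monomial_poly_def mult_single)
    then show "Poly_Mapping.single k (Poly_Mapping.lookup f k) \<in> J"
      using f k assms unfolding MC_def is_ideal_def by auto
  qed simp
  then show "f \<in> J" using poly_decomp[of f] by simp
qed

lemma gen_MC: assumes "G \<subseteq> MC (ideal_gen G)" shows "ideal_gen G \<subseteq> MC (ideal_gen G)"
  by (rule ideal_gen_least[OF MC_ideal[OF ideal_gen_ideal] assms])

lemma monomial_ideal_MC: assumes "monomial_ideal I"
  shows "ideal_pow I k \<subseteq> MC (ideal_pow I k)"
proof (induction k)
  case 0 then show ?case by (simp add: MC_def)
next
  case (Suc k)
  obtain M where M: "I = ideal_gen (monomial_poly ` M)" using assms monomial_ideal_def by blast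
  have I: "I \<subseteq> MC I" unfolding M by (rule gen_MC) (auto simp: MC_def intro: ideal_gen_sub[THEN subsetD])
  show ?case unfolding ideal_pow.simps
  proof (rule gen_MC, rule subsetI)
    fix p assume "p \<in> {a * b |a b. a \<in> I \<and> b \<in> ideal_pow I k}"
    then obtain a b where p: "p = a * b" "a \<in> I" "b \<in> ideal_pow I k" by blast
    show "p \<in> MC (ideal_gen {a * b |a b. a \<in> I \<and> b \<in> ideal_pow I k})" unfolding MC_def
    proof (intro CollectI ballI)
      fix m assume "m \<in> Poly_Mapping.keys p"
      then obtain x y where xy: "m = x + y" "x \<in> Poly_Mapping.keys a" "y \<in> Poly_Mapping.keys b" using keys_mult p(1) by blast
      have f1: "monomial_poly x \<in> I" using I p(2) xy(2) by (auto simp: MC_def)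
      have f2: "monomial_poly y \<in> ideal_pow I k" using Suc p(3) xy(3) by (auto simp: MC_def)
      have f3: "monomial_poly m = monomial_poly x * monomial_poly y" by (simp add: xy(1) mono_mult)
      have "\<exists>a b. monomial_poly m = a * b \<and> a \<in> I \<and> b \<in> ideal_pow I k"
        by (rule exI[of _ "monomial_poly x"], rule exI[of _ "monomial_poly y"]) (simp add: f1 f2 f3)
      then have "monomial_poly m \<in> {a * b |a b. a \<in> I \<and> b \<in> ideal_pow I k}" by (simp only: mem_Collect_eq)
      then show "monomial_poly m \<in> ideal_gen {a * b |a b. a \<in> I \<and> b \<in> ideal_pow I k}"
        by (rule subsetD[OF ideal_gen_sub])
    qed
  qed
qed

lemma pow_iff: assumes "monomial_ideal I"
  shows "f \<in> ideal_pow I k \<longleftrightarrow> (\<forall>m\<in>Poly_Mapping.keys f. monomial_poly m \<in> ideal_pow I k)"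
  using monomial_ideal_MC[OF assms, of k] MC_sub[OF ideal_pow_ideal, of I k] unfolding MC_def by blast



lemma key_exists:
  fixes a b :: "('n::finite,'a::field) mpoly"
  assumes Zadd: "\<And>l q. Z (l + q) \<longleftrightarrow> Z l \<and> Z q"
    and ea: "\<exists>l\<in>Poly_Mapping.keys a. Z l" and eb: "\<exists>q\<in>Poly_Mapping.keys b. Z q"
  shows "\<exists>m\<in>Poly_Mapping.keys (a*b). Z m"
proof -
  obtain \<iota> :: "'n \<Rightarrow> nat" where inj: "inj \<iota>"
    using finite_imp_inj_to_nat_seg[of "UNIV :: 'n set"] by auto
  define \<kappa> :: "('n \<Rightarrow>\<^sub>0 nat) \<Rightarrow> (nat \<Rightarrow>\<^sub>0 nat)" where
    "\<kappa> m = (\<Sum>i\<in>UNIV. Poly_Mapping.single (\<iota> i) (Poly_Mapping.lookup m i))" for m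
  have kadd: "\<kappa> (x + y) = \<kappa> x + \<kappa> y" for x y
    unfolding \<kappa>_def by (simp add: lookup_add single_add sum.distrib)
  have klook: "Poly_Mapping.lookup (\<kappa> m) (\<iota> i) = Poly_Mapping.lookup m i" for m i
  proof -
    have "Poly_Mapping.lookup (\<kappa> m) (\<iota> i) = (\<Sum>j\<in>UNIV. if j = i then Poly_Mapping.lookup m i else 0)"
      unfolding \<kappa>_def lookup_sum
      by (rule sum.cong) (auto simp: lookup_single when_def inj_eq[OF inj])
    then show ?thesis by simp
  qed
  have kinj: "\<kappa> x = \<kappa> y \<Longrightarrow> x = y" for x y
    by (rule poly_mapping_eqI) (metis klook)
  define F where "F = {l\<in>Poly_Mapping.keys a. Z l}"
  define G where "G = {l\<in>Poly_Mapping.keys b. Z l}"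
  have fF: "finite F" "F \<noteq> {}" using ea by (auto simp: F_def)
  have fG: "finite G" "G \<noteq> {}" using eb by (auto simp: G_def)
  obtain a0 where a0: "a0 \<in> F" "\<kappa> a0 = Max (\<kappa> ` F)" using Max_in[of "\<kappa> ` F"] fF by (metis (no_types, lifting) finite_imageI image_iff image_is_empty)
  obtain b0 where b0: "b0 \<in> G" "\<kappa> b0 = Max (\<kappa> ` G)" using Max_in[of "\<kappa> ` G"] fG by (metis (no_types, lifting) finite_imageI image_iff image_is_empty)
  have a0m: "l \<in> F \<Longrightarrow> \<kappa> l \<le> \<kappa> a0" for l using a0 fF by simp
  have b0m: "l \<in> G \<Longrightarrow> \<kappa> l \<le> \<kappa> b0" for l using b0 fG by simp
  define k where "k = a0 + b0"
  have Zk: "Z k" using a0 b0 Zadd by (auto simp: F_def G_def k_def)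
  have tm: "Poly_Mapping.lookup a l * (\<Sum>q. Poly_Mapping.lookup b q when k = l + q)
     = (Poly_Mapping.lookup a a0 * Poly_Mapping.lookup b b0 when l = a0)" for l
  proof (cases "l = a0")
    case True
    have "(\<lambda>q. Poly_Mapping.lookup b q when k = l + q) = (\<lambda>q. Poly_Mapping.lookup b q when b0 = q)"
      using True by (auto simp: k_def)
    then have "(\<Sum>q. Poly_Mapping.lookup b q when k = l + q) = (\<Sum>q. Poly_Mapping.lookup b q when b0 = q)"
      by (simp only:)
    also have "\<dots> = Poly_Mapping.lookup b b0" by (rule Sum_any_when_equal')
    finally show ?thesis using True by simp
  next
    case False
    have Zf: "(\<lambda>q. Poly_Mapping.lookup b q when k = l + q) = (\<lambda>q. 0)" if la: "Poly_Mapping.lookup a l \<noteq> 0"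
    proof
      fix q
      show "(Poly_Mapping.lookup b q when k = l + q) = 0"
      proof (rule ccontr)
        assume "(Poly_Mapping.lookup b q when k = l + q) \<noteq> 0"
        then have kq: "k = l + q" and bq: "Poly_Mapping.lookup b q \<noteq> 0" by auto
        have "Z l" "Z q" using Zk kq Zadd by auto
        then have lF: "l \<in> F" and qG: "q \<in> G" using la bq by (auto simp: F_def G_def in_keys_iff)
        have "\<kappa> l \<noteq> \<kappa> a0" using False kinj by metis
        then have "\<kappa> l < \<kappa> a0" using a0m[OF lF] by simp
        then have "\<kappa> l + \<kappa> q < \<kappa> a0 + \<kappa> b0" using b0m[OF qG] by (rule add_less_le_mono)
        moreover have "\<kappa> (l + q) = \<kappa> (a0 + b0)" using kq by (simp add: k_def)
        ultimately show False using kadd by (metis less_irrefl)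
      qed
    qed
    show ?thesis
    proof (cases "Poly_Mapping.lookup a l = 0")
      case True then show ?thesis using False by simp
    next
      case nz: False
      have "(\<Sum>q. Poly_Mapping.lookup b q when k = l + q) = (\<Sum>q::'n \<Rightarrow>\<^sub>0 nat. (0::'a))"
        using Zf[OF nz] by (simp only:)
      then show ?thesis using False by simp
    qed
  qed
  have "Poly_Mapping.lookup (a * b) k = Poly_Mapping.lookup a a0 * Poly_Mapping.lookup b b0"
    unfolding lookup_mult tm by simp
  also have "\<dots> \<noteq> 0" using a0 b0 by (auto simp: F_def G_def in_keys_iff)
  finally show ?thesis using Zk by (auto simp: in_keys_iff)
qed



definition PA :: "'n set \<Rightarrow> ('n::finite, 'a::field) mpoly set" where
  "PA A = {f. \<forall>m\<in>Poly_Mapping.keys f. \<exists>i\<in>A. Poly_Mapping.lookup m i > 0}"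

lemma PA_mult: "(a :: ('n::finite, 'a::field) mpoly) \<in> PA A \<Longrightarrow> r * a \<in> PA A"
  unfolding PA_def
proof (intro CollectI ballI)
  fix m assume a: "a \<in> {f. \<forall>m\<in>Poly_Mapping.keys f. \<exists>i\<in>A. 0 < Poly_Mapping.lookup m i}"
    and "m \<in> Poly_Mapping.keys (r * a)"
  then obtain x y where "m = x + y" "y \<in> Poly_Mapping.keys a" using keys_mult by blast
  then show "\<exists>i\<in>A. Poly_Mapping.lookup m i > 0" using a by (auto simp: lookup_add)
qed

lemma PA_add: "(a :: ('n::finite, 'a::field) mpoly) \<in> PA A \<Longrightarrow> b \<in> PA A \<Longrightarrow> a + b \<in> PA A"
  unfolding PA_def using keys_add[of a b] by blast

lemma PA_ideal: "is_ideal (PA A :: ('n::finite, 'a::field) mpoly set)"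
proof -
  have "(0 :: ('n, 'a) mpoly) \<in> PA A" by (simp add: PA_def)
  then show ?thesis unfolding is_ideal_def using PA_add PA_mult by blast
qed

lemma PA_ne: "PA A \<noteq> (UNIV :: ('n::finite, 'a::field) mpoly set)"
proof
  assume "PA A = (UNIV :: ('n, 'a) mpoly set)"
  then have "(1 :: ('n, 'a) mpoly) \<in> PA A" by simp
  then show False by (simp add: PA_def)
qed

lemma PA_pr: fixes a b :: "('n::finite, 'a::field) mpoly" assumes ab: "a * b \<in> PA A"
  shows "a \<in> PA A \<or> b \<in> PA A"
proof -
  define Z where "Z m = (\<forall>i\<in>A. Poly_Mapping.lookup m i = 0)" for m :: "'n \<Rightarrow>\<^sub>0 nat"
  have Zadd: "Z (l + q) \<longleftrightarrow> Z l \<and> Z q" for l q by (auto simp: Z_def lookup_add)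
  show "a \<in> PA A \<or> b \<in> PA A"
  proof (rule ccontr)
    assume "\<not> (a \<in> PA A \<or> b \<in> PA A)"
    then have "\<exists>l\<in>Poly_Mapping.keys a. Z l" "\<exists>l\<in>Poly_Mapping.keys b. Z l"
      by (auto simp: PA_def Z_def)
    from key_exists[of Z, OF Zadd this] obtain m where "m \<in> Poly_Mapping.keys (a * b)" "Z m" by blast
    then show False using ab by (auto simp: PA_def Z_def)
  qed
qed

lemma PA_prime: "prime_ideal (PA A :: ('n::finite, 'a::field) mpoly set)"
  unfolding prime_ideal_def using PA_ideal PA_ne PA_pr by blast

lemma mono_deg_add: "mono_deg (x + y) = mono_deg x + mono_deg y"
  unfolding mono_deg_def by (simp add: lookup_add sum.distrib)

lemma mono_deg_single: "mono_deg (Poly_Mapping.single (j::'n::finite) (1::nat)) = 1"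
proof -
  have "mono_deg (Poly_Mapping.single j (1::nat)) = (\<Sum>i\<in>UNIV. if i = j then 1 else 0)"
    unfolding mono_deg_def by (rule sum.cong) (auto simp: lookup_single when_def)
  then show ?thesis by simp
qed

lemma comb:
  fixes L :: "('n::finite \<Rightarrow>\<^sub>0 nat) set"
  assumes up: "\<And>u w. u \<in> L \<Longrightarrow> u + w \<in> L" and z: "0 \<notin> L"
  shows "\<exists>h A. h \<notin> L \<and> (\<forall>u. u + h \<in> L \<longleftrightarrow> (\<exists>i\<in>A. Poly_Mapping.lookup u i > 0))"
proof -
  define AA where "AA h = {i. Poly_Mapping.single i 1 + h \<in> L}" for h
  have bound: "card (AA y) < card (UNIV :: 'n set) + 1" for y
    using card_mono[of "UNIV :: 'n set" "AA y"] by auto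
  obtain h where h: "h \<notin> L" and hmax: "\<And>y. y \<notin> L \<Longrightarrow> card (AA y) \<le> card (AA h)"
    using ex_has_greatest_nat[of "\<lambda>y. y \<notin> L" 0 "\<lambda>y. card (AA y)" "card (UNIV :: 'n set) + 1"] z bound by blast
  have bk: "u + h \<in> L" if "i \<in> AA h" "Poly_Mapping.lookup u i > 0" for u i
  proof -
    have "u = Poly_Mapping.single i 1 + (u - Poly_Mapping.single i 1)"
      using that(2) by (intro poly_mapping_eqI) (auto simp: lookup_add lookup_minus lookup_single when_def)
    then have "u + h = (Poly_Mapping.single i 1 + h) + (u - Poly_Mapping.single i 1)"
      by (metis add.assoc add.commute)
    moreover have "Poly_Mapping.single i 1 + h \<in> L" using that(1) by (simp add: AA_def)
    ultimately show ?thesis using up by metis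
  qed
  have fwd: "\<forall>u. mono_deg u = d \<longrightarrow> u + h \<in> L \<longrightarrow> (\<exists>i\<in>AA h. Poly_Mapping.lookup u i > 0)" for d
  proof (induction d rule: less_induct)
    case (less d)
    show ?case
    proof (intro allI impI)
      fix u assume du: "mono_deg u = d" and uh: "u + h \<in> L"
      show "\<exists>i\<in>AA h. Poly_Mapping.lookup u i > 0"
      proof (rule ccontr)
        assume nz: "\<not> (\<exists>i\<in>AA h. Poly_Mapping.lookup u i > 0)"
        have "u \<noteq> 0" using uh h by auto
        then obtain j where j: "Poly_Mapping.lookup u j > 0"
          by (metis lookup_zero neq0_conv poly_mapping_eqI)
        define u' where "u' = u - Poly_Mapping.single j 1"
        have uu: "u = Poly_Mapping.single j 1 + u'"
          unfolding u'_def using j by (intro poly_mapping_eqI) (auto simp: lookup_add lookup_minus lookup_single when_def)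
        have jA: "j \<notin> AA h" using nz j by auto
        show False
        proof (cases "u' + h \<in> L")
          case True
          have "mono_deg u' < d" using du uu mono_deg_add[of "Poly_Mapping.single j 1" u'] mono_deg_single[of j] by simp
          then obtain i where "i \<in> AA h" "Poly_Mapping.lookup u' i > 0" using less True by blast
          then show False using nz uu by (auto simp: lookup_add)
        next
          case False
          have sub: "insert j (AA h) \<subseteq> AA (u' + h)"
          proof
            fix i assume "i \<in> insert j (AA h)"
            then show "i \<in> AA (u' + h)"
            proof
              assume "i = j" then show ?thesis using uh uu by (simp add: AA_def add.assoc)
            next
              assume "i \<in> AA h"
              then have "(Poly_Mapping.single i 1 + h) + u' \<in> L" using up unfolding AA_def by blast
              then show ?thesis by (simp add: AA_def add_ac)
            qed
          qed
          have "card (insert j (AA h)) \<le> card (AA (u' + h))" using card_mono[OF _ sub] by simp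
          moreover have "card (insert j (AA h)) = Suc (card (AA h))" using jA by simp
          ultimately show False using hmax[OF False] by simp
        qed
      qed
    qed
  qed
  have "\<forall>u. u + h \<in> L \<longleftrightarrow> (\<exists>i\<in>AA h. Poly_Mapping.lookup u i > 0)"
  proof (intro allI iffI)
    fix u assume "u + h \<in> L" then show "\<exists>i\<in>AA h. Poly_Mapping.lookup u i > 0" using fwd[of "mono_deg u"] by blast
  next
    fix u :: "'n \<Rightarrow>\<^sub>0 nat" assume "\<exists>i\<in>AA h. Poly_Mapping.lookup u i > 0" then show "u + h \<in> L" using bk by blast
  qed
  then have "h \<notin> L \<and> (\<forall>u. u + h \<in> L \<longleftrightarrow> (\<exists>i\<in>AA h. Poly_Mapping.lookup u i > 0))" using h by simp
  then show ?thesis by (rule exI[of _ h, OF exI[of _ "AA h"]])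
qed



lemma mono_I: assumes "monomial_ideal I"
  shows "f \<in> I \<longleftrightarrow> (\<forall>m\<in>Poly_Mapping.keys f. monomial_poly m \<in> I)"
proof -
  obtain M where M: "I = ideal_gen (monomial_poly ` M)" using assms monomial_ideal_def by blast
  have I: "I \<subseteq> MC I" unfolding M by (rule gen_MC) (auto simp: MC_def intro: ideal_gen_sub[THEN subsetD])
  have "MC I \<subseteq> I" unfolding M by (rule MC_sub[OF ideal_gen_ideal])
  then show ?thesis using I unfolding MC_def by blast
qed

lemma ideal_I: "monomial_ideal I \<Longrightarrow> is_ideal I"
  unfolding monomial_ideal_def using ideal_gen_ideal by blast

lemma mono_ne: "(monomial_poly x :: ('n::finite,'a::field) mpoly) \<noteq> 0"
  using keys_mono[of x] by (metis empty_not_insert keys_zero)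

lemma mono_hom: "homogeneous (mono_deg x) (monomial_poly x :: ('n::finite,'a::field) mpoly)"
  unfolding homogeneous_def by simp

lemma alpha_le: assumes "monomial_poly x \<in> I" shows "alpha I \<le> mono_deg x"
  unfolding alpha_def by (rule Least_le) (use assms mono_ne mono_hom in blast)

lemma deg_bound: fixes I :: "('n::finite,'a::field) mpoly set" assumes mI: "monomial_ideal I"
  shows "f \<in> ideal_pow I k \<Longrightarrow> m \<in> Poly_Mapping.keys f \<Longrightarrow> k * alpha I \<le> mono_deg m"
proof (induction k arbitrary: f m)
  case 0 then show ?case by simp
next
  case (Suc k)
  define D :: "('n,'a) mpoly set" where "D = {f. \<forall>m\<in>Poly_Mapping.keys f. Suc k * alpha I \<le> mono_deg m}"
  have D0: "0 \<in> D" by (simp add: D_def)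
  have Dadd: "a + b \<in> D" if "a \<in> D" "b \<in> D" for a b
    using that keys_add[of a b] unfolding D_def by blast
  have Dmul: "r * a \<in> D" if a: "a \<in> D" for a r
    unfolding D_def
  proof (intro CollectI ballI)
    fix m assume "m \<in> Poly_Mapping.keys (r * a)"
    then obtain x y where "m = x + y" "y \<in> Poly_Mapping.keys a" using keys_mult by blast
    then show "Suc k * alpha I \<le> mono_deg m" using a by (auto simp: D_def mono_deg_add)
  qed
  have Did: "is_ideal D" unfolding is_ideal_def using D0 Dadd Dmul by blast
  have "{a * b |a b. a \<in> I \<and> b \<in> ideal_pow I k} \<subseteq> D"
  proof
    fix p assume "p \<in> {a * b |a b. a \<in> I \<and> b \<in> ideal_pow I k}"
    then obtain a b where p: "p = a * b" "a \<in> I" "b \<in> ideal_pow I k" by blast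
    show "p \<in> D" unfolding D_def
    proof (intro CollectI ballI)
      fix m assume "m \<in> Poly_Mapping.keys p"
      then obtain x y where xy: "m = x + y" "x \<in> Poly_Mapping.keys a" "y \<in> Poly_Mapping.keys b"
        using keys_mult p(1) by blast
      have "monomial_poly x \<in> I" using mono_I[OF mI] p(2) xy(2) by blast
      then have "alpha I \<le> mono_deg x" by (rule alpha_le)
      moreover have "k * alpha I \<le> mono_deg y" using Suc.IH p(3) xy(3) by blast
      ultimately show "Suc k * alpha I \<le> mono_deg m" by (simp add: xy(1) mono_deg_add)
    qed
  qed
  then have "ideal_pow I (Suc k) \<subseteq> D" unfolding ideal_pow.simps by (rule ideal_gen_least[OF Did])
  then show ?case using Suc.prems unfolding D_def by blast
qed

lemma lookup_mult_mono:
  "Poly_Mapping.lookup (q * monomial_poly c :: ('n::finite,'a::field) mpoly) (m + c) = Poly_Mapping.lookup q m"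
proof -
  have inner: "(\<Sum>r. Poly_Mapping.lookup (monomial_poly c :: ('n,'a) mpoly) r when m + c = l + r) = (1 when m = l)" for l
  proof -
    have "(\<lambda>r. Poly_Mapping.lookup (monomial_poly c :: ('n,'a) mpoly) r when m + c = l + r)
        = (\<lambda>r. (1 when m = l) when c = r)"
      by (rule ext) (simp add: monomial_poly_def lookup_single when_def)
    then show ?thesis by (simp only: Sum_any_when_equal')
  qed
  have "Poly_Mapping.lookup (q * monomial_poly c :: ('n,'a) mpoly) (m + c)
      = (\<Sum>l. Poly_Mapping.lookup q l * (1 when m = l))"
    unfolding lookup_mult inner ..
  also have "\<dots> = (\<Sum>l. Poly_Mapping.lookup q l when m = l)" by (simp add: mult_when)
  also have "\<dots> = Poly_Mapping.lookup q m" by (rule Sum_any_when_equal')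
  finally show ?thesis .
qed

lemma keys_mult_mono:
  "m' \<in> Poly_Mapping.keys (q * monomial_poly c :: ('n::finite,'a::field) mpoly) \<longleftrightarrow>
   (\<exists>m\<in>Poly_Mapping.keys q. m' = m + c)"
proof
  assume "m' \<in> Poly_Mapping.keys (q * monomial_poly c)"
  then obtain a b where ab: "m' = a + b" "a \<in> Poly_Mapping.keys q" "b \<in> Poly_Mapping.keys (monomial_poly c :: ('n,'a) mpoly)"
    using keys_mult[of q "monomial_poly c"] by blast
  then have "b = c" by simp
  then show "\<exists>m\<in>Poly_Mapping.keys q. m' = m + c" using ab by blast
next
  assume "\<exists>m\<in>Poly_Mapping.keys q. m' = m + c"
  then obtain m where "m \<in> Poly_Mapping.keys q" "m' = m + c" by blast
  then show "m' \<in> Poly_Mapping.keys (q * monomial_poly c)" using lookup_mult_mono[of q c m] by (simp add: in_keys_iff)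
qed


lemma mono_zero: "(monomial_poly 0 :: ('n::finite,'a::field) mpoly) = 1"
  unfolding monomial_poly_def by simp

lemma mono_deg_zero: "mono_deg (0 :: 'n::finite \<Rightarrow>\<^sub>0 nat) = 0"
  unfolding mono_deg_def by simp

lemma mono_deg_eq0: "mono_deg (x :: 'n::finite \<Rightarrow>\<^sub>0 nat) = 0 \<Longrightarrow> x = 0"
  unfolding mono_deg_def by (intro poly_mapping_eqI) simp

theorem theorem4p7:
  fixes I :: "('n::finite, 'a::field) mpoly set"
  assumes "monomial_ideal I" and "I \<noteq> {0}" and "I \<noteq> UNIV"
  shows "\<exists>n0 d::nat. n0 > 0 \<and> d > 0 \<and>
           (\<forall>n\<ge>n0. v_number (ideal_pow I (n + 1)) \<le> n * alpha I + d)"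
proof -
  note mI = assms(1)
  have idI: "is_ideal I" by (rule ideal_I[OF mI])
  have idP: "is_ideal (ideal_pow I k)" for k by (rule ideal_pow_ideal)
  obtain f where f: "f \<in> I" "f \<noteq> 0" using assms(2) idI unfolding is_ideal_def by blast
  then obtain x where "x \<in> Poly_Mapping.keys f" by (metis keys_eq_empty ex_in_conv)
  then have "monomial_poly x \<in> I" using mono_I[OF mI] f by blast
  then have "\<exists>d f. f \<in> I \<and> f \<noteq> 0 \<and> homogeneous d f" using mono_ne mono_hom by blast
  then have "\<exists>f. f \<in> I \<and> f \<noteq> 0 \<and> homogeneous (alpha I) f"
    unfolding alpha_def by (rule LeastI_ex)
  then obtain f0 where f0: "f0 \<in> I" "f0 \<noteq> 0" "homogeneous (alpha I) f0" by blast
  then obtain \<gamma> where \<gamma>k: "\<gamma> \<in> Poly_Mapping.keys f0" by (metis keys_eq_empty ex_in_conv)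
  have deg\<gamma>: "mono_deg \<gamma> = alpha I" using f0(3) \<gamma>k unfolding homogeneous_def by blast
  have g\<gamma>: "monomial_poly \<gamma> \<in> I" using mono_I[OF mI] f0(1) \<gamma>k by blast
  define \<alpha> where "\<alpha> = alpha I"
  have apos: "\<alpha> > 0"
  proof (rule ccontr)
    assume "\<not> \<alpha> > 0"
    then have "\<gamma> = 0" using deg\<gamma> mono_deg_eq0 by (simp add: \<alpha>_def)
    then have one: "(1 :: ('n,'a) mpoly) \<in> I" using g\<gamma> mono_zero by metis
    have "I = UNIV"
    proof (intro set_eqI iffI)
      fix r :: "('n,'a) mpoly" show "r \<in> I" using idI one unfolding is_ideal_def by (metis mult.right_neutral)
    qed simp
    then show False using assms(3) by simp
  qed
  define g where "g = (monomial_poly \<gamma> :: ('n,'a) mpoly)"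
  define E where "E n = (\<Sum>i<n. \<gamma>)" for n :: nat
  have gpow: "g ^ n = monomial_poly (E n)" for n
  proof (induction n)
    case 0 then show ?case by (simp add: E_def mono_zero)
  next
    case (Suc n) then show ?case by (simp add: E_def g_def mono_mult add.commute)
  qed
  have degE: "mono_deg (E n) = n * \<alpha>" for n
  proof (induction n)
    case 0 then show ?case by (simp add: E_def mono_deg_zero)
  next
    case (Suc n) then show ?case by (simp add: E_def mono_deg_add deg\<gamma> \<alpha>_def)
  qed
  define L where "L = {u. \<exists>n. monomial_poly u * g ^ n \<in> ideal_pow I (Suc n)}"
  have stepg: "monomial_poly u * g ^ Suc n \<in> ideal_pow I (Suc (Suc n))"
    if "monomial_poly u * g ^ n \<in> ideal_pow I (Suc n)" for u n
  proof -
    have "g * (monomial_poly u * g ^ n) \<in> {a * b |a b. a \<in> I \<and> b \<in> ideal_pow I (Suc n)}"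
      using that g\<gamma> unfolding g_def by blast
    then have "g * (monomial_poly u * g ^ n) \<in> ideal_pow I (Suc (Suc n))"
      unfolding ideal_pow.simps(2)[of I "Suc n"] by (rule subsetD[OF ideal_gen_sub])
    moreover have "g * (monomial_poly u * g ^ n) = monomial_poly u * g ^ Suc n" by (simp add: mult_ac)
    ultimately show ?thesis by simp
  qed
  have monoL: "monomial_poly u * g ^ m \<in> ideal_pow I (Suc m)"
    if "monomial_poly u * g ^ n \<in> ideal_pow I (Suc n)" "n \<le> m" for u n m
    using that(2)
  proof (induction m rule: dec_induct)
    case base then show ?case using that(1) by simp
  next
    case (step m) then show ?case using stepg by blast
  qed
  have up: "u + w \<in> L" if uL: "u \<in> L" for u w
  proof -
    obtain n where n: "monomial_poly u * g ^ n \<in> ideal_pow I (Suc n)" using uL L_def by blast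
    have "monomial_poly w * (monomial_poly u * g ^ n) \<in> ideal_pow I (Suc n)"
      using n idP unfolding is_ideal_def by blast
    moreover have "monomial_poly w * (monomial_poly u * g ^ n) = monomial_poly (u + w) * g ^ n"
      by (simp add: mono_mult[symmetric] mult_ac)
    ultimately show ?thesis unfolding L_def by auto
  qed
  have z: "0 \<notin> L"
  proof
    assume "0 \<in> L"
    then obtain n where n: "monomial_poly 0 * g ^ n \<in> ideal_pow I (Suc n)" using L_def by blast
    then have "monomial_poly (E n) \<in> ideal_pow I (Suc n)" by (simp add: mono_zero gpow)
    then have "Suc n * alpha I \<le> mono_deg (E n)" using deg_bound[OF mI, of "monomial_poly (E n)" "Suc n" "E n"] by simp
    then show False using degE[of n] apos by (simp add: \<alpha>_def)
  qed
  obtain h A where h: "h \<notin> L" and hA: "\<And>u. u + h \<in> L \<longleftrightarrow> (\<exists>i\<in>A. Poly_Mapping.lookup u i > 0)"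
    using comb[of L, OF up z] by blast
  have AL: "\<exists>n. monomial_poly (Poly_Mapping.single i 1 + h) * g ^ n \<in> ideal_pow I (Suc n)" if "i \<in> A" for i
  proof -
    have "Poly_Mapping.lookup (Poly_Mapping.single i (1::nat)) i > 0" by simp
    then have "Poly_Mapping.single i 1 + h \<in> L" using hA[of "Poly_Mapping.single i 1"] that by blast
    then show ?thesis unfolding L_def by blast
  qed
  define cc where "cc i = (SOME n. monomial_poly (Poly_Mapping.single i 1 + h) * g ^ n \<in> ideal_pow I (Suc n))" for i
  define N where "N = Max (cc ` A)"
  have AN: "monomial_poly (Poly_Mapping.single i 1 + h) * g ^ n \<in> ideal_pow I (Suc n)"
    if "i \<in> A" "N \<le> n" for i n
  proof -
    have c: "monomial_poly (Poly_Mapping.single i 1 + h) * g ^ cc i \<in> ideal_pow I (Suc (cc i))"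
      unfolding cc_def using someI_ex[OF AL[OF that(1)]] .
    have "cc i \<le> N" unfolding N_def using that(1) by simp
    then show ?thesis using monoL[OF c] that(2) by simp
  qed
  have Ln: "monomial_poly (u + h) * g ^ n \<in> ideal_pow I (Suc n) \<longleftrightarrow> (\<exists>i\<in>A. Poly_Mapping.lookup u i > 0)"
    if "N \<le> n" for u n
  proof
    assume "monomial_poly (u + h) * g ^ n \<in> ideal_pow I (Suc n)"
    then have "u + h \<in> L" unfolding L_def by blast
    then show "\<exists>i\<in>A. Poly_Mapping.lookup u i > 0" using hA by blast
  next
    assume "\<exists>i\<in>A. Poly_Mapping.lookup u i > 0"
    then obtain i where i: "i \<in> A" "Poly_Mapping.lookup u i > 0" by blast
    define w where "w = u - Poly_Mapping.single i 1"
    have uw: "u = Poly_Mapping.single i 1 + w"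
      unfolding w_def using i(2) by (intro poly_mapping_eqI) (auto simp: lookup_add lookup_minus lookup_single when_def)
    have "monomial_poly w * (monomial_poly (Poly_Mapping.single i 1 + h) * g ^ n) \<in> ideal_pow I (Suc n)"
      using AN[OF i(1) that] idP unfolding is_ideal_def by blast
    moreover have "monomial_poly w * (monomial_poly (Poly_Mapping.single i 1 + h) * g ^ n) = monomial_poly (u + h) * g ^ n"
      by (simp add: uw mono_mult mult.assoc[symmetric] add_ac)
    ultimately show "monomial_poly (u + h) * g ^ n \<in> ideal_pow I (Suc n)" by simp
  qed
  have main: "v_number (ideal_pow I (n + 1)) \<le> n * alpha I + mono_deg h" if "N \<le> n" for n
  proof -
    define c where "c = E n + h"
    have fc: "g ^ n * monomial_poly h = monomial_poly c" by (simp add: gpow c_def mono_mult)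
    have col: "colon (ideal_pow I (n + 1)) (monomial_poly c) = PA A"
    proof (intro set_eqI)
      fix q :: "('n,'a) mpoly"
      have "q \<in> colon (ideal_pow I (n + 1)) (monomial_poly c) \<longleftrightarrow> q * monomial_poly c \<in> ideal_pow I (Suc n)"
        by (simp add: colon_def)
      also have "\<dots> \<longleftrightarrow> (\<forall>m'\<in>Poly_Mapping.keys (q * monomial_poly c). monomial_poly m' \<in> ideal_pow I (Suc n))"
        by (rule pow_iff[OF mI])
      also have "\<dots> \<longleftrightarrow> (\<forall>m\<in>Poly_Mapping.keys q. monomial_poly (m + c) \<in> ideal_pow I (Suc n))"
      proof -
        have "Poly_Mapping.keys (q * monomial_poly c) = (\<lambda>m. m + c) ` Poly_Mapping.keys q"
          by (rule set_eqI) (simp only: keys_mult_mono image_iff)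
        then show ?thesis by simp
      qed
      also have "\<dots> \<longleftrightarrow> (\<forall>m\<in>Poly_Mapping.keys q. monomial_poly (m + h) * g ^ n \<in> ideal_pow I (Suc n))"
      proof -
        have "monomial_poly (m + c) = monomial_poly (m + h) * g ^ n" for m
          by (simp add: gpow mono_mult c_def add_ac)
        then show ?thesis by simp
      qed
      also have "\<dots> \<longleftrightarrow> (\<forall>m\<in>Poly_Mapping.keys q. \<exists>i\<in>A. Poly_Mapping.lookup m i > 0)"
        using Ln[OF that] by blast
      also have "\<dots> \<longleftrightarrow> q \<in> PA A" by (simp add: PA_def)
      finally show "q \<in> colon (ideal_pow I (n + 1)) (monomial_poly c) \<longleftrightarrow> q \<in> PA A" .
    qed
    have "PA A \<in> Ass (ideal_pow I (n + 1))"
      unfolding Ass_def using PA_prime col by blast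
    then have "\<exists>f P. homogeneous (mono_deg c) f \<and> P \<in> Ass (ideal_pow I (n + 1)) \<and> colon (ideal_pow I (n + 1)) f = P"
      using mono_hom col by blast
    then have "v_number (ideal_pow I (n + 1)) \<le> mono_deg c"
      unfolding v_number_def by (rule Least_le)
    also have "mono_deg c = n * alpha I + mono_deg h" by (simp add: c_def mono_deg_add degE \<alpha>_def)
    finally show ?thesis .
  qed
  show ?thesis
  proof (intro exI conjI allI impI)
    show "Suc N > 0" by simp
    show "Suc (mono_deg h) > 0" by simp
    fix n assume "Suc N \<le> n"
    then have "v_number (ideal_pow I (n + 1)) \<le> n * alpha I + mono_deg h" using main by simp
    then show "v_number (ideal_pow I (n + 1)) \<le> n * alpha I + Suc (mono_deg h)" by simp
  qed
qed

end
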